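(* For $a\in(0,1)$ define $$F(a):=-\int_0^{\pi}\operatorname{Im}\bigl\{w_a(t)\bigr\}\,\frac{dt}{\sqrt{a+1/a-2\cos t}},$$ where $w_a:[0,\pi]\to\mathbb{C}$ is the continuous fourth root of $e^{3it}\,\frac{1-ae^{it}}{e^{it}-a}$ (i.e. $w_a(t)^4=e^{3it}\frac{1-ae^{it}}{e^{it}-a}$) with $w_a(0)=1$. Let $\alpha\in(0,1)$ be the unique zero of $F$ in $(0,1)$. Then $\alpha>\tfrac12$.
   Context: It is established (independently of this statement) that $F$ vanishes at exactly one point of $(0,1)$, which is denoted $\alpha$; $F(a)$ is negative for $a$ close to $0$ and $F(a)\to+\infty$ as $a\to1$. *)

theory Defs
  imports "HOL-Analysis.Analysis"
begin

definition radicand :: "real \<Rightarrow> real \<Rightarrow> complex" where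
  "radicand a t = cis (3 * t) * (1 - of_real a * cis t) / (cis t - of_real a)"

definition w :: "real \<Rightarrow> real \<Rightarrow> complex" where
  "w a = (THE v. continuous_on {0..pi} v \<and> (\<forall>t\<in>{0..pi}. v t ^ 4 = radicand a t) \<and> v 0 = 1
                 \<and> (\<forall>t. t \<notin> {0..pi} \<longrightarrow> v t = 0))"

definition F :: "real \<Rightarrow> real" where
  "F a = - integral {0..pi} (\<lambda>t. Im (w a t) / sqrt (a + 1 / a - 2 * cos t))"

end

theory Submission
  imports Defs
begin

definition rr :: "real \<Rightarrow> real \<Rightarrow> real" where
  "rr a t = sqrt (1 + a^2 - 2*a*cos t)"

definition th :: "real \<Rightarrow> real \<Rightarrow> real" where
  "th a t = arccos ((cos t - a) / rr a t)"

definition v :: "real \<Rightarrow> real \<Rightarrow> complex" where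
  "v a t = (if t \<in> {0..pi} then cis (t - th a t / 2) else 0)"

lemma r2_pos: fixes a t :: real assumes "0 < a" "a < 1" shows "1 + a^2 - 2*a*cos t > 0"
proof -
  have "a * cos t \<le> a" using assms cos_le_one[of t] by (simp add: mult_left_le)
  hence "1 + a^2 - 2*a*cos t \<ge> (1-a)^2" by (simp add: power2_eq_square algebra_simps)
  moreover have "(1-a)^2 > 0" using assms by simp
  ultimately show ?thesis by linarith
qed

lemma rr_pos: "0 < (a::real) \<Longrightarrow> a < 1 \<Longrightarrow> rr a t > 0"
  using r2_pos by (simp add: rr_def)

lemma rr_sq: "0 < (a::real) \<Longrightarrow> a < 1 \<Longrightarrow> (rr a t)^2 = 1 + a^2 - 2*a*cos t"
  using r2_pos[of a t] by (simp add: rr_def)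

lemma ratio_bd: fixes a t :: real assumes "0 < a" "a < 1" shows "\<bar>(cos t - a) / rr a t\<bar> \<le> 1"
proof -
  have "(cos t - a)^2 \<le> (rr a t)^2" using rr_sq[OF assms] sin_squared_eq[of t]
    by (simp add: power2_eq_square algebra_simps) (smt (verit) mult_nonneg_nonneg sin_squared_eq zero_le_power2 power2_eq_square)
  hence "\<bar>cos t - a\<bar> \<le> rr a t" using rr_pos[OF assms, of t] by (metis abs_le_square_iff abs_of_pos)
  thus ?thesis using rr_pos[OF assms, of t] by (simp add: divide_le_eq_1 abs_divide)
qed

lemma cos_th: "0 < (a::real) \<Longrightarrow> a < 1 \<Longrightarrow> cos (th a t) = (cos t - a) / rr a t"
  using ratio_bd by (simp add: th_def cos_arccos_abs)

lemma sin_th: fixes a t :: real assumes "0 < a" "a < 1" "t \<in> {0..pi}" shows "sin (th a t) = sin t / rr a t"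
proof -
  have s: "sin t \<ge> 0" using assms sin_ge_zero by auto
  have r: "rr a t > 0" using rr_pos assms by auto
  have "1 - ((cos t - a) / rr a t)^2 = (sin t / rr a t)^2"
    using rr_sq[OF assms(1,2), of t] r sin_squared_eq[of t]
    by (simp add: field_simps power2_eq_square)
  thus ?thesis using ratio_bd[OF assms(1,2), of t] s r
    by (simp add: th_def sin_arccos_abs real_sqrt_abs)
qed


lemma cis_th: fixes a t :: real assumes "0 < a" "a < 1" "t \<in> {0..pi}"
  shows "cis (th a t) = (cis t - of_real a) / of_real (rr a t)"
  using cos_th[OF assms(1,2), of t] sin_th[OF assms] rr_pos[OF assms(1,2), of t]
  by (simp add: complex_eq_iff cis.sel)

lemma key_id: fixes a t :: real
  shows "cis t * of_real (1 + a^2 - 2*a*cos t) = (1 - of_real a * cis t) * (cis t - of_real a)"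
proof -
  have e: "(sin t)^2 = 1 - (cos t)^2" by (simp add: sin_squared_eq)
  show ?thesis
    by (simp add: complex_eq_iff cis.sel algebra_simps power2_eq_square) (metis distrib_left mult.right_neutral sin_cos_squared_add3)
qed

lemma cis_ne: fixes a :: real assumes "0 < a" "a < 1" shows "cis t - of_real a \<noteq> 0"
proof
  assume "cis t - of_real a = 0"
  hence "norm (cis t) = norm (of_real a :: complex)" by simp
  thus False using assms by simp
qed

lemma v_pow: fixes a t :: real assumes "0 < a" "a < 1" "t \<in> {0..pi}"
  shows "v a t ^ 4 = radicand a t"
proof -
  define z where "z = cis t"
  define u where "u = cis (th a t)"
  have u: "u = (z - of_real a) / of_real (rr a t)" using cis_th[OF assms] by (simp add: u_def z_def)
  have r: "rr a t > 0" using rr_pos assms by auto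
  have ne: "z - of_real a \<noteq> 0" using cis_ne assms by (simp add: z_def)
  have "v a t ^ 4 = cis (t - th a t / 2) ^ 4" using assms by (simp add: v_def)
  also have "\<dots> = cis (real 4 * (t - th a t / 2))" by (rule Complex.DeMoivre)
  also have "\<dots> = cis (4 * t - 2 * th a t)" by (rule arg_cong[where f=cis]) (simp add: algebra_simps)
  also have "\<dots> = cis (3*t) * z / u^2" using Complex.DeMoivre[of "th a t" 2] by (simp add: z_def u_def cis_divide[symmetric] DeMoivre cis_mult algebra_simps)
  also have "\<dots> = cis (3*t) * (z * of_real ((rr a t)^2)) / (z - of_real a)^2"
    using r ne by (simp add: u field_simps)
  also have "\<dots> = cis (3*t) * ((1 - of_real a * z) * (z - of_real a)) / (z - of_real a)^2"
    using key_id[of t a] rr_sq[OF assms(1,2), of t] by (simp add: z_def)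
  also have "\<dots> = radicand a t" using ne by (simp add: radicand_def z_def power2_eq_square)
  finally show ?thesis .
qed

lemma v_cont: fixes a :: real assumes "0 < a" "a < 1" shows "continuous_on {0..pi} (v a)"
proof -
  have b: "\<And>x. -1 \<le> (cos x - a)/rr a x \<and> (cos x - a)/rr a x \<le> 1"
  proof -
    fix x have "\<bar>(cos x - a)/rr a x\<bar> \<le> 1" by (rule ratio_bd[OF assms])
    thus "-1 \<le> (cos x - a)/rr a x \<and> (cos x - a)/rr a x \<le> 1" by (auto simp del: abs_divide simp: abs_le_iff)
  qed
  have "continuous_on {0..pi} (\<lambda>t. cis (t - th a t / 2))"
    unfolding th_def rr_def
    using b r2_pos[OF assms]
    by (intro continuous_intros) (auto simp: rr_def dest: less_imp_neq[symmetric])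
  thus ?thesis by (rule continuous_on_eq) (simp add: v_def)
qed


lemma v_nz: "t \<in> {0..pi} \<Longrightarrow> v a t \<noteq> 0" by (simp add: v_def)

lemma v0: fixes a :: real assumes "0 < a" "a < 1" shows "v a 0 = 1"
proof -
  have "1 + a^2 - 2*a*cos 0 = (1-a)^2" by (simp add: power2_eq_square algebra_simps)
  hence "rr a 0 = 1 - a" using assms by (simp add: rr_def)
  hence "th a 0 = 0" using assms by (simp add: th_def)
  thus ?thesis by (simp add: v_def)
qed

lemma w_eq: fixes a :: real assumes "0 < a" "a < 1" shows "w a = v a"
  unfolding w_def
proof (rule the_equality)
  show "continuous_on {0..pi} (v a) \<and> (\<forall>t\<in>{0..pi}. v a t ^ 4 = radicand a t) \<and> v a 0 = 1
        \<and> (\<forall>t. t \<notin> {0..pi} \<longrightarrow> v a t = 0)"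
    using v_cont[OF assms] v_pow[OF assms] v0[OF assms] by (simp add: v_def)
next
  fix g assume g: "continuous_on {0..pi} g \<and> (\<forall>t\<in>{0..pi}. g t ^ 4 = radicand a t) \<and> g 0 = 1
        \<and> (\<forall>t. t \<notin> {0..pi} \<longrightarrow> g t = 0)"
  define q where "q t = g t / v a t" for t
  have qc: "continuous_on {0..pi} q" unfolding q_def
    using g v_cont[OF assms] v_nz by (intro continuous_intros) auto
  have q4: "q t ^ 4 = 1" if "t \<in> {0..pi}" for t
  proof -
    have e: "v a t ^ 4 = radicand a t" using v_pow[OF assms that] .
    have "v a t ^ 4 \<noteq> 0" using v_nz[OF that, of a] by simp
    hence nz: "radicand a t \<noteq> 0" using e by simp
    have "g t ^ 4 = radicand a t" using g that by blast
    thus ?thesis using nz e by (simp add: q_def power_divide)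
  qed
  have "finite {z::complex. z^4 = 1}" by (intro finite_roots_unity) simp
  moreover have "q ` {0..pi} \<subseteq> {z::complex. z^4 = 1}" using q4 by blast
  ultimately have "finite (q ` {0..pi})" by (rule finite_subset[rotated])
  hence "q constant_on {0..pi}" using qc by (intro continuous_finite_range_constant) auto
  then obtain c where c: "\<And>t. t \<in> {0..pi} \<Longrightarrow> q t = c" by (auto simp: constant_on_def)
  have "q 0 = 1" using g v0[OF assms] by (simp add: q_def)
  hence qq: "\<And>t. t \<in> {0..pi} \<Longrightarrow> q t = 1" using c[of 0] c by simp
  show "g = v a"
  proof
    fix t show "g t = v a t"
    proof (cases "t \<in> {0..pi}")
      case True thus ?thesis using qq[OF True] v_nz[OF True, of a] by (simp add: q_def)
    next
      case False thus ?thesis using g by (simp add: v_def)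
    qed
  qed
qed


lemma poly_ineq:
  fixes a c r :: real
  assumes c: "0 < c" "c \<le> 1" and a: "0 < a" "a \<le> 1/2" and r: "r \<ge> 0" "r^2 = 1 + a^2 - 2*a*c"
  shows "(2*c^2 - 1) * r \<le> c - a"
proof -
  have iden: "(c-a)^2 - (2*c^2-1)^2 * r^2 = (1 - c^2) * (4*c^2*r^2 - 1)"
    unfolding r(2) by (simp add: power2_eq_square algebra_simps)
  have c2: "1 - c^2 \<ge> 0" using c by (simp add: abs_square_le_1)
  show ?thesis
  proof (cases "2*c^2 > 1")
    case True
    have c12: "c > 1/2"
    proof (rule ccontr)
      assume "\<not> c > 1/2"
      hence "c*c \<le> (1/2)*(1/2)" using c by (intro mult_mono) auto
      thus False using True by (simp add: power2_eq_square)
    qed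
    have h1: "(a - 1/2) * (a + 1/2 - 2*c) \<ge> 0" using a c12 by (intro mult_nonpos_nonpos) auto
    have h2: "r^2 \<ge> 5/4 - c" using h1 unfolding r(2) by (simp add: algebra_simps power2_eq_square)
    have h3: "4*c^2 - c - 1 \<ge> 0" using True c by linarith
    have h4: "(1 - c) * (4*c^2 - c - 1) \<ge> 0" using h3 c by simp
    have h5: "4*c^2*(5/4 - c) - 1 \<ge> 0" using h4 by (simp add: algebra_simps power2_eq_square power3_eq_cube)
    have h6: "4*c^2*r^2 \<ge> 4*c^2*(5/4 - c)" using h2 by (simp add: mult_left_mono)
    have "(1 - c^2) * (4*c^2*r^2 - 1) \<ge> 0" using c2 h5 h6 by (intro mult_nonneg_nonneg) linarith+
    hence "(2*c^2-1)^2 * r^2 \<le> (c-a)^2" using iden by linarith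
    hence "((2*c^2-1) * r)^2 \<le> (c-a)^2" by (simp add: power_mult_distrib)
    moreover have "c - a \<ge> 0" using c12 a by linarith
    ultimately show ?thesis by (meson power2_le_imp_le)
  next
    case False
    show ?thesis
    proof (cases "a \<le> c")
      case True
      have "(2*c^2 - 1) * r \<le> 0" using False r by (simp add: mult_nonpos_nonneg)
      thus ?thesis using True by linarith
    next
      case ac: False
      have h1: "(a - c) * (a - 1/2) \<le> 0" using ac a by (intro mult_nonneg_nonpos) auto
      have h1': "(1/2 - c) * a \<le> (1/2 - c) * (1/2)" using ac a by (intro mult_left_mono) auto
      have A: "a*a \<le> a*c + a/2 - c/2" using h1 by (simp add: algebra_simps diff_divide_distrib)
      have B: "a/2 - a*c \<le> 1/4 - c/2" using h1' by (simp add: algebra_simps)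
      have C: "r^2 = 1 + a*a - 2*(a*c)" using r(2) by (simp add: power2_eq_square algebra_simps)
      have h2: "r^2 \<le> 5/4 - c" using A B C by linarith
      have "c*c \<le> c*(1/2)" using ac a c by (intro mult_left_mono) auto
      hence cc: "c*c \<le> c/2" by simp
      have h3: "4*c^2 - c - 1 \<le> 0" using cc c unfolding power2_eq_square by linarith
      have h4: "(1 - c) * (4*c^2 - c - 1) \<le> 0" using h3 c by (simp add: mult_nonneg_nonpos)
      have h5: "4*c^2*(5/4 - c) - 1 \<le> 0" using h4 by (simp add: algebra_simps power2_eq_square power3_eq_cube)
      have h6: "4*c^2*r^2 \<le> 4*c^2*(5/4 - c)" using h2 by (simp add: mult_left_mono)
      have "(1 - c^2) * (4*c^2*r^2 - 1) \<le> 0" using c2 h5 h6 by (intro mult_nonneg_nonpos) linarith+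
      hence "(c-a)^2 \<le> (2*c^2-1)^2 * r^2" using iden by linarith
      hence "(a-c)^2 \<le> ((1 - 2*c^2) * r)^2" by (simp add: power_mult_distrib power2_commute)
      moreover have "(1 - 2*c^2) * r \<ge> 0" using False r by simp
      ultimately have "a - c \<le> (1 - 2*c^2) * r" by (meson power2_le_imp_le)
      thus ?thesis by (simp add: algebra_simps)
    qed
  qed
qed


lemma th_bounds: fixes a t :: real assumes "0 < a" "a < 1" shows "0 \<le> th a t" "th a t \<le> pi"
proof -
  have "\<bar>(cos t - a) / rr a t\<bar> \<le> 1" by (rule ratio_bd[OF assms])
  hence b: "-1 \<le> (cos t - a) / rr a t" "(cos t - a) / rr a t \<le> 1" by (auto simp del: abs_divide simp: abs_le_iff)
  show "0 \<le> th a t" unfolding th_def using b by (rule arccos_lbound)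
  show "th a t \<le> pi" unfolding th_def using b by (rule arccos_ubound)
qed

lemma th_le: fixes a t :: real assumes "0 < a" "a \<le> 1/2" "t \<in> {0..pi}" shows "th a t \<le> 2 * t"
proof (cases "t \<ge> pi/2")
  case True thus ?thesis using th_bounds[of a t] assms by auto
next
  case False
  have a1: "a < 1" using assms by simp
  have c0: "cos t > 0" using False assms by (intro cos_gt_zero_pi) auto
  have r: "rr a t > 0" using rr_pos[OF assms(1) a1] .
  have "(2*(cos t)^2 - 1) * rr a t \<le> cos t - a"
    using c0 assms r rr_sq[OF assms(1) a1, of t]
    by (intro poly_ineq) auto
  hence le: "cos (2*t) \<le> (cos t - a) / rr a t" using r by (simp add: cos_double_cos pos_le_divide_eq)
  have "\<bar>(cos t - a) / rr a t\<bar> \<le> 1" by (rule ratio_bd[OF assms(1) a1])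
  hence b: "(cos t - a) / rr a t \<le> 1" by (auto simp del: abs_divide simp: abs_le_iff)
  have "th a t \<le> arccos (cos (2*t))" unfolding th_def
    using le b cos_ge_minus_one by (intro arccos_le_arccos) auto
  also have "\<dots> = 2*t" using False assms by (intro arccos_cos) auto
  finally show ?thesis .
qed

lemma im_v_nonneg: fixes a t :: real assumes "0 < a" "a \<le> 1/2" "t \<in> {0..pi}" shows "Im (v a t) \<ge> 0"
proof -
  have "0 \<le> t - th a t / 2" using th_le[OF assms] by simp
  moreover have "t - th a t / 2 \<le> pi" using th_bounds[of a t] assms by auto
  ultimately show ?thesis using assms by (simp add: v_def sin_ge_zero)
qed

lemma im_v_pi: fixes a :: real assumes "0 < a" "a < 1" shows "Im (v a pi) = 1"
proof -
  have "1 + a^2 - 2*a*cos pi = (1+a)^2" by (simp add: power2_eq_square algebra_simps)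
  hence "rr a pi = 1 + a" using assms by (simp add: rr_def)
  hence "(cos pi - a) / rr a pi = -1" using assms by (simp add: field_simps)
  hence "th a pi = pi" by (simp add: th_def)
  thus ?thesis by (simp add: v_def)
qed

lemma F_neg: fixes a :: real assumes "0 < a" "a \<le> 1/2" shows "F a < 0"
proof -
  have a1: "a < 1" using assms by simp
  define f where "f t = Im (w a t) / sqrt (a + 1 / a - 2 * cos t)" for t
  have den: "a + 1/a - 2 * cos t > 0" for t
  proof -
    have "a + 1/a - 2 * cos t = (1 + a^2 - 2*a*cos t) / a" using assms by (simp add: field_simps power2_eq_square)
    thus ?thesis using r2_pos[OF assms(1) a1, of t] assms by simp
  qed
  have wv: "w a = v a" by (rule w_eq[OF assms(1) a1])
  have fc: "continuous_on {0..pi} f" unfolding f_def wv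
    using v_cont[OF assms(1) a1] den
    by (intro continuous_intros) (auto dest: less_imp_neq[symmetric])
  have fnn: "f t \<ge> 0" if "t \<in> {0..pi}" for t
    unfolding f_def wv using im_v_nonneg[OF assms that] den[of t] by simp
  have fpi: "f pi > 0" unfolding f_def wv using im_v_pi[OF assms(1) a1] den[of pi] by simp
  have "integral {0..pi} f \<noteq> 0"
    using integral_eq_0_iff[OF fc pi_gt_zero] fnn fpi by force
  moreover have "integral {0..pi} f \<ge> 0"
    using fnn integrable_continuous_interval[OF fc] by (intro integral_nonneg) auto
  ultimately have "integral {0..pi} f > 0" by simp
  moreover have "F a = - integral {0..pi} f" unfolding F_def f_def by (rule refl)
  ultimately show ?thesis by simp
qed

theorem lemma5p1:
  fixes \<alpha> :: real
  assumes "\<alpha> \<in> {0<..<1}"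
    and "F \<alpha> = 0"
    and "\<forall>a\<in>{0<..<1}. F a = 0 \<longrightarrow> a = \<alpha>"
  shows "\<alpha> > 1/2"
proof (rule ccontr)
  assume "\<not> \<alpha> > 1/2"
  hence "F \<alpha> < 0" using assms(1) by (intro F_neg) auto
  thus False using assms(2) by simp
qed

end
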